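(* Let $k\ge2$, $\exp_k(x)=\sum_{T\in\mathbb P}\alpha_Tx^T$, and $\lambda\in\mathbb C$. Then the expansion of $\exp_k(x)$ around $\lambda$ is $e^{\lambda}\exp_k(x-\lambda)$; that is, for every $T\in\mathbb P$, $$\sum_{U\in\mathbb P}\alpha_U\,(U/T)\,\lambda^{\deg(U)-\deg(T)}=e^{\lambda}\alpha_T .$$ (Informally: $\exp_k(\lambda+x)=e^\lambda\exp_k(x)$.)
   Context: Let $\mathbb P$ denote the set of finite planar reduced rooted trees (children of each vertex linearly ordered, no vertex with exactly one child), including the empty tree $\mathbf 1$ and the one-vertex tree $|$; $\deg(T)$ is the number of leaves, $L(T)$ the set of leaves. The algebra $\mathbb C\{x\}_{\mathbb P}$ has basis $\{x^T\}$, $x^{\mathbf 1}=1$, $x^|=x$, with $k$-linear operations $\omega_k$ ($k\ge2$), $\omega_k(x^{T_1},\dots,x^{T_k})=x^T$ where $T$ is obtained by attaching the nonempty $T_i$ in order as subtrees of the children of a new root (if exactly one is nonempty, $T$ is that one; if none, $T=\mathbf 1$). $\mathbb C\{\{x\}\}_{\mathbb P}$ is the algebra of formal series $\sum_T\gamma_Tx^T$. For $f=\sum\gamma_Tx^T$ and $c\in\mathbb C$, $f(cx)=\sum\gamma_Tc^{\deg T}x^T$. The $k$-ary exponential series $\exp_k(x)$ is the unique $f\in\mathbb C\{\{x\}\}_{\mathbb P}$ with $f=1+x+(\text{terms of degree}\ge2)$ and $\omega_k(f,\dots,f)=f(kx)$; it has infinite radius of convergence. Contraction $S|I$ for $I\subseteq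 L(S)$: the tree obtained from the subtree of $S$ spanned by the root-to-leaf paths to leaves in $I$ by suppressing all vertices with exactly one child; planar binomial coefficient $(S/T)=\#\{I\subseteq L(S):S|I=T\}$. The expansion of $f=\sum_U\gamma_Ux^U$ around $\lambda$ is $\sum_T\big(\sum_U\gamma_U(U/T)\lambda^{\deg U-\deg T}\big)(x-\lambda)^T$. *)

theory Defs
  imports "HOL-Analysis.Analysis"
begin

text \<open>A tree in the set P is an element of type rtree option, where None is the empty tree 1
  and Some Lf is the one-vertex tree.\<close>

datatype rtree = Lf | Nd "rtree list"

primrec reduced :: "rtree \<Rightarrow> bool" where
  "reduced Lf = True"
| "reduced (Nd ts) = (2 \<le> length ts \<and> list_all reduced ts)"

definition inP :: "rtree option \<Rightarrow> bool" where
  "inP T = (case T of None \<Rightarrow> True | Some t \<Rightarrow> reduced t)"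

primrec tdeg :: "rtree \<Rightarrow> nat" where
  "tdeg Lf = 1"
| "tdeg (Nd ts) = sum_list (map tdeg ts)"

definition pdeg :: "rtree option \<Rightarrow> nat" where
  "pdeg T = (case T of None \<Rightarrow> 0 | Some t \<Rightarrow> tdeg t)"

definition graft :: "rtree option list \<Rightarrow> rtree option" where
  "graft xs = (let ys = map the (filter (\<lambda>x. x \<noteq> None) xs) in
     if ys = [] then None else if length ys = 1 then Some (hd ys) else Some (Nd ys))"

text \<open>Formal series: coefficient functions P \<Rightarrow> C.  The k-linear operation omega_k
  extended to series: coefficient at T.\<close>
definition omega_coeff :: "nat \<Rightarrow> (rtree option \<Rightarrow> complex) list \<Rightarrow> rtree option \<Rightarrow> complex" where
  "omega_coeff k fs T =
     (\<Sum>ts \<in> {ts. length ts = k \<and> list_all inP ts \<and> graft ts = T}.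
        \<Prod>i<k. (fs ! i) (ts ! i))"

text \<open>f is the k-ary exponential series: f = 1 + x + (degree \<ge> 2 terms),
  omega_k(f,...,f) = f(kx); coefficients vanish outside P.\<close>
definition is_exp_series :: "nat \<Rightarrow> (rtree option \<Rightarrow> complex) \<Rightarrow> bool" where
  "is_exp_series k f =
     ((\<forall>T. \<not> inP T \<longrightarrow> f T = 0) \<and> f None = 1 \<and> f (Some Lf) = 1 \<and>
      (\<forall>T. inP T \<longrightarrow> omega_coeff k (replicate k f) T = of_nat k ^ pdeg T * f T))"

definition exp_k :: "nat \<Rightarrow> rtree option \<Rightarrow> complex" where
  "exp_k k = (THE f. is_exp_series k f)"

text \<open>Contraction S|I; leaves are numbered 0,1,... from left to right.\<close>
fun contract :: "rtree \<Rightarrow> nat set \<Rightarrow> rtree option"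
and contract_list :: "rtree list \<Rightarrow> nat set \<Rightarrow> rtree option list" where
  "contract Lf I = (if 0 \<in> I then Some Lf else None)"
| "contract (Nd ts) I = graft (contract_list ts I)"
| "contract_list [] I = []"
| "contract_list (t # ts) I = contract t I # contract_list ts {i. i + tdeg t \<in> I}"

definition pcontract :: "rtree option \<Rightarrow> nat set \<Rightarrow> rtree option" where
  "pcontract S I = (case S of None \<Rightarrow> None | Some s \<Rightarrow> contract s I)"

definition pbinom :: "rtree option \<Rightarrow> rtree option \<Rightarrow> nat" where
  "pbinom S T = card {I. I \<subseteq> {..<pdeg S} \<and> pcontract S I = T}"

end

theory Submission
  imports Defs
begin



lemma tdeg_pos: "reduced t \<Longrightarrow> tdeg t \<ge> 1"
proof (induction t)
  case Lf then show ?case by simp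
next
  case (Nd ts)
  then obtain t where "t \<in> set ts" by (cases ts) auto
  with Nd have "tdeg t \<ge> 1" by (simp add: list_all_iff)
  moreover have "tdeg t \<le> sum_list (map tdeg ts)"
    using \<open>t \<in> set ts\<close> by (simp add: member_le_sum_list)
  ultimately show ?case by simp
qed

lemma tdeg_ge2: "reduced (Nd ts) \<Longrightarrow> tdeg (Nd ts) \<ge> 2"
proof -
  assume r: "reduced (Nd ts)"
  then obtain a b rest where ts: "ts = a # b # rest"
    by (cases ts; cases "tl ts") auto
  have "tdeg a \<ge> 1" "tdeg b \<ge> 1" using r ts tdeg_pos by auto
  then show ?thesis using ts by simp
qed

lemma inP_deg0: "inP T \<Longrightarrow> pdeg T = 0 \<longleftrightarrow> T = None"
  by (cases T) (auto simp: inP_def pdeg_def dest: tdeg_pos)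

lemma inP_deg1: "inP T \<Longrightarrow> pdeg T = 1 \<longleftrightarrow> T = Some Lf"
proof (cases T)
  case (Some t) assume "inP T" then show ?thesis using Some tdeg_ge2
    by (cases t) (fastforce simp: inP_def pdeg_def)+
qed (simp add: pdeg_def)

lemma graft_filter: "filter (\<lambda>x. x \<noteq> None) xs = filter (\<lambda>x. x \<noteq> None) ys \<Longrightarrow> graft xs = graft ys"
  by (simp add: graft_def)

lemma sum_pdeg_filter: "sum_list (map pdeg (filter (\<lambda>x. x \<noteq> None) xs)) = sum_list (map pdeg xs)"
  by (induction xs) (auto simp: pdeg_def)

lemma pdeg_graft: "pdeg (graft xs) = sum_list (map pdeg xs)"
proof -
  let ?ys = "map the (filter (\<lambda>x. x \<noteq> None) xs)"
  have m: "map Some ?ys = filter (\<lambda>x. x \<noteq> None) xs"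
    by (induction xs) auto
  have s: "sum_list (map pdeg xs) = sum_list (map tdeg ?ys)"
  proof -
    have "sum_list (map pdeg xs) = sum_list (map pdeg (map Some ?ys))"
      using m sum_pdeg_filter by metis
    also have "\<dots> = sum_list (map tdeg ?ys)" by (simp add: pdeg_def o_def)
    finally show ?thesis .
  qed
  show ?thesis
  proof (cases "?ys = []")
    case True then show ?thesis using s by (simp add: graft_def pdeg_def)
  next
    case False
    show ?thesis
    proof (cases "length ?ys = 1")
      case True
      then obtain y where "?ys = [y]" by (cases ?ys) auto
      then show ?thesis using s by (simp add: graft_def pdeg_def)
    next
      case False
      then show ?thesis using s \<open>?ys \<noteq> []\<close> unfolding graft_def Let_def by (simp add: pdeg_def)
    qed
  qed
qed

lemma inP_graft: "list_all inP xs \<Longrightarrow> inP (graft xs)"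
proof -
  assume a: "list_all inP xs"
  let ?ys = "map the (filter (\<lambda>x. x \<noteq> None) xs)"
  have r: "list_all reduced ?ys" using a
    by (induction xs) (auto simp: inP_def)
  show ?thesis
  proof (cases "?ys = []")
    case True then show ?thesis by (simp add: graft_def inP_def)
  next
    case False
    show ?thesis
    proof (cases "length ?ys = 1")
      case True
      then obtain y where "?ys = [y]" by (cases ?ys) auto
      then show ?thesis using r by (simp add: graft_def inP_def)
    next
      case False
      have "length ?ys \<noteq> 0" using \<open>?ys \<noteq> []\<close> by simp
      then have "length ?ys \<ge> 2" using False by linarith
      then show ?thesis using r \<open>?ys \<noteq> []\<close> False unfolding graft_def Let_def by (simp add: inP_def)
    qed
  qed
qed

lemma graft_single: "j < k \<Longrightarrow> graft ((replicate k None)[j := T]) = T"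
proof -
  assume j: "j < k"
  have "filter (\<lambda>x. x \<noteq> None) ((replicate k None)[j := T]) = (if T = None then [] else [T])"
    using j
  proof (induction k arbitrary: j)
    case 0 then show ?case by simp
  next
    case (Suc k) then show ?case by (cases j) auto
  qed
  then show ?thesis by (cases T) (auto simp: graft_def)
qed




definition Om :: "nat \<Rightarrow> rtree option \<Rightarrow> rtree option list set" where
  "Om k T = {ts. length ts = k \<and> list_all inP ts \<and> graft ts = T}"

lemma sum_tdeg_ge_length: "list_all reduced ts \<Longrightarrow> length ts \<le> sum_list (map tdeg ts)"
  by (induction ts) (auto dest: tdeg_pos)

lemma child_deg_lt: "reduced (Nd ts) \<Longrightarrow> t \<in> set ts \<Longrightarrow> tdeg t < tdeg (Nd ts)"
proof -
  assume r: "reduced (Nd ts)" and t: "t \<in> set ts"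
  have "sum_list (map tdeg ts) = tdeg t + sum_list (map tdeg (remove1 t ts))"
    using t by (simp add: sum_list_map_remove1)
  moreover have "length (remove1 t ts) \<ge> 1" using r t by (simp add: length_remove1) linarith
  moreover have "list_all reduced (remove1 t ts)" using r
    by (simp add: list_all_iff) (meson notin_set_remove1)
  ultimately show ?thesis using sum_tdeg_ge_length[of "remove1 t ts"] by simp
qed

lemma finite_reduced_deg: "finite {t. reduced t \<and> tdeg t \<le> m}"
proof (induction m)
  case 0
  have "{t. reduced t \<and> tdeg t \<le> 0} = {}" using tdeg_pos by fastforce
  then show ?case by (metis finite.emptyI)
next
  case (Suc m)
  let ?A = "{t. reduced t \<and> tdeg t \<le> m}"
  have "{t. reduced t \<and> tdeg t \<le> Suc m} \<subseteq> insert Lf (Nd ` {ts. set ts \<subseteq> ?A \<and> length ts \<le> Suc m})"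
  proof
    fix t assume "t \<in> {t. reduced t \<and> tdeg t \<le> Suc m}"
    then have r: "reduced t" and d: "tdeg t \<le> Suc m" by auto
    show "t \<in> insert Lf (Nd ` {ts. set ts \<subseteq> ?A \<and> length ts \<le> Suc m})"
    proof (cases t)
      case (Nd ts)
      have "set ts \<subseteq> ?A"
        using child_deg_lt[of ts] r d Nd by (auto simp: list_all_iff) (meson less_Suc_eq_le order_less_le_trans)
      moreover have "length ts \<le> Suc m" using sum_tdeg_ge_length[of ts] r d Nd by simp
      ultimately show ?thesis using Nd by auto
    qed simp
  qed
  moreover have "finite (insert Lf (Nd ` {ts. set ts \<subseteq> ?A \<and> length ts \<le> Suc m}))"
    using Suc finite_lists_length_le by blast
  ultimately show ?case by (rule finite_subset)
qed

lemma finite_P_le: "finite {U. inP U \<and> pdeg U \<le> m}"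
proof -
  have "{U. inP U \<and> pdeg U \<le> m} \<subseteq> insert None (Some ` {t. reduced t \<and> tdeg t \<le> m})"
  proof
    fix U assume "U \<in> {U. inP U \<and> pdeg U \<le> m}"
    then show "U \<in> insert None (Some ` {t. reduced t \<and> tdeg t \<le> m})"
      by (cases U) (auto simp: inP_def pdeg_def)
  qed
  then show ?thesis using finite_reduced_deg finite_subset by blast
qed

lemma finite_P_eq: "finite {U. inP U \<and> pdeg U = m}"
  by (rule finite_subset[OF _ finite_P_le[of m]]) auto

lemma Om_deg: "ts \<in> Om k T \<Longrightarrow> sum_list (map pdeg ts) = pdeg T"
  by (auto simp: Om_def pdeg_graft)

lemma Om_finite: "finite (Om k T)"
proof -
  have "Om k T \<subseteq> {ts. set ts \<subseteq> {U. inP U \<and> pdeg U \<le> pdeg T} \<and> length ts = k}"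
  proof
    fix ts assume a: "ts \<in> Om k T"
    then have "\<forall>x\<in>set ts. pdeg x \<le> pdeg T"
      using Om_deg[OF a] member_le_sum_list[of _ "map pdeg ts"] by auto
    then show "ts \<in> {ts. set ts \<subseteq> {U. inP U \<and> pdeg U \<le> pdeg T} \<and> length ts = k}"
      using a by (auto simp: Om_def list_all_iff)
  qed
  then show ?thesis using finite_lists_length_eq[OF finite_P_le] finite_subset by blast
qed

lemma Om_single: "inP T \<Longrightarrow> j < k \<Longrightarrow> (replicate k None)[j := T] \<in> Om k T"
  by (auto simp: Om_def graft_single list_all_iff inP_def in_set_conv_nth nth_list_update)

lemma sum_list_pdeg_nth: "sum_list (map pdeg ts) = (\<Sum>i<length ts. pdeg (ts!i))"
  by (simp add: sum_list_sum_nth atLeast0LessThan)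

lemma Om_bad:
  assumes ts: "ts \<in> Om k T" and j: "j < k" and d: "pdeg T \<le> pdeg (ts!j)"
  shows "ts = (replicate k None)[j := T]"
proof -
  have len: "length ts = k" and inp: "\<forall>x\<in>set ts. inP x" using ts by (auto simp: Om_def list_all_iff)
  have s: "(\<Sum>i<k. pdeg (ts!i)) = pdeg T" using Om_deg[OF ts] len sum_list_pdeg_nth by metis
  have z: "ts!i = None" if i: "i < k" "i \<noteq> j" for i
  proof -
    have "(\<Sum>i\<in>{i,j}. pdeg (ts!i)) \<le> (\<Sum>i<k. pdeg (ts!i))"
      by (rule sum_mono2) (use i j in auto)
    then have "pdeg (ts!i) = 0" using s d i by simp
    moreover have "inP (ts!i)" using inp i len by auto
    ultimately show ?thesis using inP_deg0 by blast
  qed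
  have e: "ts = (replicate k None)[j := ts!j]"
  proof (rule nth_equalityI)
    show "length ts = length ((replicate k None)[j := ts!j])" using len by simp
    fix i assume "i < length ts"
    then show "ts ! i = (replicate k None)[j := ts!j] ! i"
      using z len by (cases "i = j") auto
  qed
  have "graft ts = ts!j" using graft_single[OF j, of "ts!j"] e by metis
  then have "ts!j = T" using ts by (simp add: Om_def)
  then show ?thesis using e by simp
qed




lemma rep_upd_same[simp]: "(replicate k x)[j := x] = replicate k x"
  by (induction k arbitrary: j) (auto split: nat.split)

lemma prod_single_nontriv:
  fixes h :: "nat \<Rightarrow> 'a::comm_monoid_mult"
  assumes "j < k" "\<And>i. i < k \<Longrightarrow> i \<noteq> j \<Longrightarrow> h i = 1"
  shows "(\<Prod>i<k. h i) = h j"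
proof -
  have "(\<Prod>i<k. h i) = h j * (\<Prod>i\<in>{..<k} - {j}. h i)"
    using assms(1) by (simp add: prod.remove)
  also have "(\<Prod>i\<in>{..<k} - {j}. h i) = 1" using assms(2) by (intro prod.neutral) auto
  finally show ?thesis by simp
qed

definition good :: "nat \<Rightarrow> rtree option \<Rightarrow> rtree option list set" where
  "good k T = {ts \<in> Om k T. \<forall>i<k. pdeg (ts!i) < pdeg T}"

lemma Om_inP: "ts \<in> Om k T \<Longrightarrow> i < k \<Longrightarrow> inP (ts!i)"
  by (auto simp: Om_def list_all_iff)

lemma Om_len: "ts \<in> Om k T \<Longrightarrow> length ts = k"
  by (auto simp: Om_def)

lemma Om_minus_good:
  assumes "inP T" "pdeg T \<ge> 1"
  shows "Om k T - good k T = (\<lambda>j. (replicate k None)[j := T]) ` {..<k}"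
proof
  show "Om k T - good k T \<subseteq> (\<lambda>j. (replicate k None)[j := T]) ` {..<k}"
  proof
    fix ts assume "ts \<in> Om k T - good k T"
    then obtain j where "ts \<in> Om k T" "j < k" "pdeg T \<le> pdeg (ts!j)"
      by (auto simp: good_def not_less)
    then show "ts \<in> (\<lambda>j. (replicate k None)[j := T]) ` {..<k}" using Om_bad by blast
  qed
next
  show "(\<lambda>j. (replicate k None)[j := T]) ` {..<k} \<subseteq> Om k T - good k T"
    using assms Om_single by (force simp: good_def)
qed

lemma inj_single: "T \<noteq> None \<Longrightarrow> inj_on (\<lambda>j. (replicate k None)[j := T]) {..<k}"
proof (rule inj_onI)
  fix i j assume "T \<noteq> None" "i \<in> {..<k}" "j \<in> {..<k}" "(replicate k None)[i := T] = (replicate k None)[j := T]"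
  then have "(replicate k None)[i := T] ! i = (replicate k None)[j := T] ! i" by simp
  then show "i = j" using \<open>T \<noteq> None\<close> \<open>i \<in> {..<k}\<close> by (cases "i = j") auto
qed

lemma Om_split:
  fixes g :: "rtree option \<Rightarrow> 'a::comm_ring_1"
  assumes "inP T" "pdeg T \<ge> 1" "g None = 1"
  shows "(\<Sum>ts\<in>Om k T. \<Prod>i<k. g (ts!i)) = (\<Sum>ts\<in>good k T. \<Prod>i<k. g (ts!i)) + of_nat k * g T"
proof -
  have TN: "T \<noteq> None" using assms by (cases T) (auto simp: pdeg_def)
  have "(\<Sum>ts\<in>Om k T. \<Prod>i<k. g (ts!i)) = (\<Sum>ts\<in>Om k T - good k T. \<Prod>i<k. g (ts!i)) + (\<Sum>ts\<in>good k T. \<Prod>i<k. g (ts!i))"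
    by (rule sum.subset_diff) (auto simp: good_def Om_finite)
  also have "(\<Sum>ts\<in>Om k T - good k T. \<Prod>i<k. g (ts!i)) = (\<Sum>j<k. \<Prod>i<k. g ((replicate k None)[j := T] ! i))"
    unfolding Om_minus_good[OF assms(1,2)] by (subst sum.reindex[OF inj_single[OF TN]]) simp
  also have "\<dots> = (\<Sum>j<k. g T)"
  proof (rule sum.cong[OF refl])
    fix j assume "j \<in> {..<k}"
    then show "(\<Prod>i<k. g ((replicate k None)[j := T] ! i)) = g T"
      using assms(3) by (subst prod_single_nontriv[where j = j]) auto
  qed
  finally show ?thesis by (simp add: add.commute)
qed

lemma Om_None: "k \<ge> 1 \<Longrightarrow> Om k None = {replicate k None}"
proof
  assume k: "k \<ge> 1"
  show "Om k None \<subseteq> {replicate k None}"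
  proof
    fix ts assume "ts \<in> Om k None"
    then have "ts = (replicate k None)[0 := None]" using Om_bad[of ts k None 0] k by (simp add: pdeg_def)
    then show "ts \<in> {replicate k None}" by simp
  qed
  show "{replicate k None} \<subseteq> Om k None"
    using Om_single[of None 0 k] k by (simp add: inP_def)
qed




definition stepf :: "nat \<Rightarrow> (rtree option \<Rightarrow> real) \<Rightarrow> rtree option \<Rightarrow> real" where
  "stepf k g T = (if \<not> inP T then 0 else if pdeg T \<le> 1 then 1 else
     (\<Sum>ts\<in>good k T. \<Prod>i<k. g (ts!i)) / (real k ^ pdeg T - real k))"

definition ar :: "nat \<Rightarrow> rtree option \<Rightarrow> real" where
  "ar k T = (stepf k ^^ Suc (pdeg T)) (\<lambda>_. 0) T"

lemma good_entries: "ts \<in> good k T \<Longrightarrow> i < k \<Longrightarrow> inP (ts!i) \<and> pdeg (ts!i) < pdeg T"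
  by (auto simp: good_def Om_inP)

lemma stepf_cong:
  assumes "\<And>t. inP t \<Longrightarrow> pdeg t < pdeg T \<Longrightarrow> g t = h t"
  shows "stepf k g T = stepf k h T"
proof -
  have "(\<Sum>ts\<in>good k T. \<Prod>i<k. g (ts!i)) = (\<Sum>ts\<in>good k T. \<Prod>i<k. h (ts!i))"
    by (intro sum.cong prod.cong refl) (use assms good_entries in auto)
  then show ?thesis by (simp add: stepf_def)
qed

lemma iter_stable: "\<forall>T. pdeg T < m \<longrightarrow> (stepf k ^^ m) z T = (stepf k ^^ Suc m) z T"
proof (induction m)
  case 0 then show ?case by simp
next
  case (Suc m)
  show ?case
  proof (intro allI impI)
    fix T assume "pdeg T < Suc m"
    have "stepf k ((stepf k ^^ m) z) T = stepf k ((stepf k ^^ Suc m) z) T"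
      by (rule stepf_cong) (use Suc \<open>pdeg T < Suc m\<close> in auto)
    then show "(stepf k ^^ Suc m) z T = (stepf k ^^ Suc (Suc m)) z T" by simp
  qed
qed

lemma iter_eq: "pdeg T < m \<Longrightarrow> (stepf k ^^ m) (\<lambda>_. 0) T = ar k T"
proof -
  assume "pdeg T < m"
  then obtain d where m: "m = Suc (pdeg T) + d" by (metis less_iff_Suc_add add_Suc)
  have "(stepf k ^^ (Suc (pdeg T) + d)) (\<lambda>_. 0) T = ar k T"
  proof (induction d)
    case 0 then show ?case by (simp add: ar_def)
  next
    case (Suc d)
    then show ?case using iter_stable[of "Suc (pdeg T) + d" k "\<lambda>_. 0"] by simp
  qed
  then show ?thesis using m by simp
qed

lemma ar_eq: "ar k T = stepf k (ar k) T"
proof -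
  have "ar k T = stepf k ((stepf k ^^ pdeg T) (\<lambda>_. 0)) T" by (simp add: ar_def)
  also have "\<dots> = stepf k (ar k) T"
    by (rule stepf_cong) (simp add: iter_eq)
  finally show ?thesis .
qed

lemma pow_gt: "2 \<le> k \<Longrightarrow> 2 \<le> d \<Longrightarrow> (k::nat) < k ^ d"
proof -
  assume k: "2 \<le> k" and d: "2 \<le> d"
  have "k < k ^ 2" using k by (simp add: power2_eq_square)
  also have "k ^ 2 \<le> k ^ d" using k d by (intro power_increasing) auto
  finally show ?thesis .
qed

lemma ar_nonneg: "2 \<le> k \<Longrightarrow> ar k T \<ge> 0"
proof (induction "pdeg T" arbitrary: T rule: less_induct)
  case less
  show ?case
  proof (cases "inP T \<and> pdeg T \<ge> 2")
    case True
    have "real k < real k ^ pdeg T" using pow_gt[OF less.prems, of "pdeg T"] True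
      by (metis of_nat_less_iff of_nat_power)
    moreover have "(\<Sum>ts\<in>good k T. \<Prod>i<k. ar k (ts!i)) \<ge> 0"
      by (intro sum_nonneg prod_nonneg) (use less good_entries in auto)
    ultimately show ?thesis using True by (subst ar_eq) (simp add: stepf_def)
  next
    case False
    then show ?thesis by (subst ar_eq) (auto simp: stepf_def)
  qed
qed

definition alpha :: "nat \<Rightarrow> rtree option \<Rightarrow> complex" where
  "alpha k T = complex_of_real (ar k T)"

lemma omega_coeff_Om: "omega_coeff k (replicate k f) T = (\<Sum>ts\<in>Om k T. \<Prod>i<k. f (ts!i))"
  unfolding omega_coeff_def Om_def by (intro sum.cong prod.cong refl) auto

lemma good_deg1: "pdeg T = 1 \<Longrightarrow> good k T = {}"
proof (rule ccontr)
  assume "pdeg T = 1" "good k T \<noteq> {}"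
  then obtain ts where ts: "ts \<in> good k T" by auto
  then have "\<forall>i<k. pdeg (ts!i) = 0" using \<open>pdeg T = 1\<close> by (auto simp: good_def)
  moreover have "sum_list (map pdeg ts) = 1" using ts \<open>pdeg T = 1\<close> Om_deg by (auto simp: good_def)
  moreover have "length ts = k" using ts by (auto simp: good_def Om_def)
  ultimately show False by (simp add: sum_list_pdeg_nth)
qed

lemma alpha_exp: assumes "2 \<le> k" shows "is_exp_series k (alpha k)"
  unfolding is_exp_series_def
proof (intro conjI allI impI)
  fix T :: "rtree option" assume "\<not> inP T"
  then show "alpha k T = 0" by (subst alpha_def, subst ar_eq) (simp add: stepf_def)
next
  show "alpha k None = 1" by (subst alpha_def, subst ar_eq) (simp add: stepf_def inP_def pdeg_def)
next
  show "alpha k (Some Lf) = 1" by (subst alpha_def, subst ar_eq) (simp add: stepf_def inP_def pdeg_def)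
next
  fix T assume T: "inP T"
  have a0: "alpha k None = 1" by (subst alpha_def, subst ar_eq) (simp add: stepf_def inP_def pdeg_def)
  show "omega_coeff k (replicate k (alpha k)) T = of_nat k ^ pdeg T * alpha k T"
    unfolding omega_coeff_Om
  proof (cases "pdeg T = 0")
    case True
    then have "T = None" using T inP_deg0 by auto
    then show "(\<Sum>ts\<in>Om k T. \<Prod>i<k. alpha k (ts!i)) = of_nat k ^ pdeg T * alpha k T"
      using assms a0 by (simp add: Om_None pdeg_def)
  next
    case False
    then have d1: "pdeg T \<ge> 1" by simp
    note sp = Om_split[OF T d1, of "alpha k" k, OF a0]
    show "(\<Sum>ts\<in>Om k T. \<Prod>i<k. alpha k (ts!i)) = of_nat k ^ pdeg T * alpha k T"
    proof (cases "pdeg T = 1")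
      case True
      then show ?thesis using sp good_deg1 by simp
    next
      case False
      then have d2: "pdeg T \<ge> 2" using d1 by simp
      have ne: "real k ^ pdeg T - real k \<noteq> 0" using pow_gt[OF assms d2]
        by (metis eq_iff_diff_eq_0 less_irrefl of_nat_eq_iff of_nat_power)
      have "ar k T = (\<Sum>ts\<in>good k T. \<Prod>i<k. ar k (ts!i)) / (real k ^ pdeg T - real k)"
        using d2 T by (subst ar_eq) (simp add: stepf_def)
      then have "(\<Sum>ts\<in>good k T. \<Prod>i<k. ar k (ts!i)) = (real k ^ pdeg T - real k) * ar k T"
        using ne by (simp add: field_simps)
      then have "(\<Sum>ts\<in>good k T. \<Prod>i<k. alpha k (ts!i)) = (of_nat k ^ pdeg T - of_nat k) * alpha k T"
      proof -
        have "(\<Sum>ts\<in>good k T. \<Prod>i<k. alpha k (ts!i)) = of_real (\<Sum>ts\<in>good k T. \<Prod>i<k. ar k (ts!i))"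
          by (simp add: alpha_def)
        also have "\<dots> = of_real ((real k ^ pdeg T - real k) * ar k T)" using \<open>(\<Sum>ts\<in>good k T. \<Prod>i<k. ar k (ts!i)) = _\<close> by simp
        also have "\<dots> = (of_nat k ^ pdeg T - of_nat k) * alpha k T" by (simp add: alpha_def)
        finally show ?thesis .
      qed
      then show ?thesis using sp by (simp add: algebra_simps)
    qed
  qed
qed

lemma exp_series_unique:
  assumes k: "2 \<le> k" and f: "is_exp_series k f" and g: "is_exp_series k g"
  shows "f T = g T"
proof (induction "pdeg T" arbitrary: T rule: less_induct)
  case less
  have f0: "f None = 1" "f (Some Lf) = 1" and g0: "g None = 1" "g (Some Lf) = 1"
    using f g by (auto simp: is_exp_series_def)
  show ?case
  proof (cases "inP T")
    case False then show ?thesis using f g by (simp add: is_exp_series_def)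
  next
    case T: True
    show ?thesis
    proof (cases "pdeg T \<le> 1")
      case True
      then have "T = None \<or> T = Some Lf" using T inP_deg0 inP_deg1 by (metis le_SucE le_zero_eq One_nat_def)
      then show ?thesis using f0 g0 by auto
    next
      case False
      then have d2: "pdeg T \<ge> 2" by simp
      then have d1: "1 \<le> pdeg T" by simp
      have ef: "(\<Sum>ts\<in>Om k T. \<Prod>i<k. f (ts!i)) = of_nat k ^ pdeg T * f T"
        using f T by (simp add: is_exp_series_def omega_coeff_Om)
      have eg: "(\<Sum>ts\<in>Om k T. \<Prod>i<k. g (ts!i)) = of_nat k ^ pdeg T * g T"
        using g T by (simp add: is_exp_series_def omega_coeff_Om)
      have gs: "(\<Sum>ts\<in>good k T. \<Prod>i<k. f (ts!i)) = (\<Sum>ts\<in>good k T. \<Prod>i<k. g (ts!i))"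
        by (intro sum.cong prod.cong refl) (use less good_entries in auto)
      have "(of_nat k ^ pdeg T - of_nat k) * f T = (of_nat k ^ pdeg T - of_nat k) * (g T :: complex)"
        using Om_split[where g=f and k=k, OF T d1 f0(1)] Om_split[where g=g and k=k, OF T d1 g0(1)] ef eg gs d2
        by (simp add: algebra_simps)
      moreover have "(of_nat k ^ pdeg T - of_nat k :: complex) \<noteq> 0" using pow_gt[OF k d2]
        by (metis eq_iff_diff_eq_0 less_irrefl of_nat_eq_iff of_nat_power)
      ultimately show ?thesis by simp
    qed
  qed
qed

lemma exp_k_alpha: "2 \<le> k \<Longrightarrow> exp_k k = alpha k"
  unfolding exp_k_def
proof (rule the_equality)
  assume k: "2 \<le> k"
  show "is_exp_series k (alpha k)" using alpha_exp[OF k] .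
  fix f assume "is_exp_series k f"
  then show "f = alpha k" using exp_series_unique[OF k _ alpha_exp[OF k]] by blast
qed




lemma contract_cong:
  "(\<forall>J. (\<forall>x<tdeg t. x \<in> I \<longleftrightarrow> x \<in> J) \<longrightarrow> contract t I = contract t J)"
  "(\<forall>J. (\<forall>x<sum_list (map tdeg ts). x \<in> I \<longleftrightarrow> x \<in> J) \<longrightarrow> contract_list ts I = contract_list ts J)"
proof (induction t I and ts I rule: contract_contract_list.induct)
  case (1 I) then show ?case by simp
next
  case (2 ts I) then show ?case by (metis tdeg.simps(2) contract.simps(2))
next
  case (3 I) then show ?case by simp
next
  case (4 t ts I)
  show ?case
  proof (intro allI impI)
    fix J assume a: "\<forall>x<sum_list (map tdeg (t # ts)). x \<in> I \<longleftrightarrow> x \<in> J"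
    have "contract t I = contract t J" using 4(1) a by simp
    moreover have "contract_list ts {i. i + tdeg t \<in> I} = contract_list ts {i. i + tdeg t \<in> J}"
      using 4(2)[rule_format, of "{i. i + tdeg t \<in> J}"] a by simp
    ultimately show "contract_list (t # ts) I = contract_list (t # ts) J" by simp
  qed
qed

lemma contract_restrict: "contract t (I \<inter> {..<tdeg t}) = contract t I"
  using contract_cong(1)[of t "I \<inter> {..<tdeg t}"] by auto

lemma length_contract_list[simp]: "length (contract_list ts I) = length ts"
  by (induction ts arbitrary: I) auto

lemma contract_inP:
  "reduced t \<Longrightarrow> inP (contract t I)"
  "list_all reduced ts \<Longrightarrow> list_all inP (contract_list ts I)"
proof (induction t I and ts I rule: contract_contract_list.induct)
  case (1 I) then show ?case by (simp add: inP_def)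
next
  case (2 ts I) then show ?case by (simp add: inP_graft)
qed auto

lemma card_split:
  "card (I \<inter> {..<(a::nat) + b}) = card (I \<inter> {..<a}) + card ({x. x + a \<in> I} \<inter> {..<b})"
proof -
  have e: "I \<inter> {..<a + b} = (I \<inter> {..<a}) \<union> (\<lambda>x. x + a) ` ({x. x + a \<in> I} \<inter> {..<b})"
  proof
    show "I \<inter> {..<a + b} \<subseteq> (I \<inter> {..<a}) \<union> (\<lambda>x. x + a) ` ({x. x + a \<in> I} \<inter> {..<b})"
    proof
      fix x assume "x \<in> I \<inter> {..<a + b}"
      then show "x \<in> (I \<inter> {..<a}) \<union> (\<lambda>x. x + a) ` ({x. x + a \<in> I} \<inter> {..<b})"
        by (cases "x < a") (auto intro!: image_eqI[where x = "x - a"])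
    qed
  qed auto
  have "card (I \<inter> {..<a + b}) = card (I \<inter> {..<a}) + card ((\<lambda>x. x + a) ` ({x. x + a \<in> I} \<inter> {..<b}))"
    unfolding e by (rule card_Un_disjoint) auto
  also have "card ((\<lambda>x. x + a) ` ({x. x + a \<in> I} \<inter> {..<b})) = card ({x. x + a \<in> I} \<inter> {..<b})"
    by (rule card_image) (auto simp: inj_on_def)
  finally show ?thesis .
qed

lemma contract_deg:
  "pdeg (contract t I) = card (I \<inter> {..<tdeg t})"
  "sum_list (map pdeg (contract_list ts I)) = card (I \<inter> {..<sum_list (map tdeg ts)})"
proof (induction t I and ts I rule: contract_contract_list.induct)
  case (1 I) then show ?case by (auto simp: pdeg_def lessThan_Suc)
next
  case (2 ts I) then show ?case by (simp add: pdeg_graft)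
next
  case (3 I) then show ?case by simp
next
  case (4 t ts I) then show ?case by (simp add: card_split)
qed

lemma contract_full:
  "reduced t \<Longrightarrow> {..<tdeg t} \<subseteq> I \<Longrightarrow> contract t I = Some t"
  "list_all reduced ts \<Longrightarrow> {..<sum_list (map tdeg ts)} \<subseteq> I \<Longrightarrow> contract_list ts I = map Some ts"
proof (induction t I and ts I rule: contract_contract_list.induct)
  case (1 I) then show ?case by auto
next
  case (2 ts I)
  then have "contract_list ts I = map Some ts" by simp
  moreover have "length ts \<ge> 2" using 2 by simp
  moreover then have "ts \<noteq> []" by auto
  ultimately show ?case by (simp add: graft_def filter_map o_def Let_def)
next
  case (3 I) then show ?case by simp
next
  case (4 t ts I)
  have "{..<tdeg t} \<subseteq> I" using 4(4) by auto
  moreover have "{..<sum_list (map tdeg ts)} \<subseteq> {i. i + tdeg t \<in> I}" using 4(4) by auto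
  ultimately show ?case using 4 by simp
qed

definition pc :: "rtree option \<times> nat set \<Rightarrow> rtree option" where
  "pc p = pcontract (fst p) (snd p)"

lemma pcontract_None[simp]: "pcontract None I = None"
  by (simp add: pcontract_def)

lemma pcontract_restrict: "pcontract u (I \<inter> {..<pdeg u}) = pcontract u I"
  by (cases u) (auto simp: pcontract_def pdeg_def contract_restrict)

lemma pcontract_inP: assumes "inP u" shows "inP (pcontract u I)"
proof (cases u)
  case None then show ?thesis by (simp add: inP_def pcontract_def)
next
  case (Some a)
  then have "reduced a" using assms by (simp add: inP_def)
  then show ?thesis by (simp add: Some pcontract_def contract_inP)
qed

lemma pcontract_deg: assumes "I \<subseteq> {..<pdeg u}" shows "pdeg (pcontract u I) = card I"
proof (cases u)
  case None then show ?thesis using assms by (simp add: pdeg_def)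
next
  case (Some a)
  then have "I \<subseteq> {..<tdeg a}" using assms by (simp add: pdeg_def)
  then show ?thesis using contract_deg(1)[of a I] Some by (simp add: pcontract_def Int_absorb2)
qed

lemma pcontract_full: "inP u \<Longrightarrow> pcontract u {..<pdeg u} = u"
  by (cases u) (auto simp: pcontract_def pdeg_def inP_def contract_full)

fun splitL :: "rtree option list \<Rightarrow> nat set \<Rightarrow> nat set list" where
  "splitL [] I = []"
| "splitL (u # us) I = (I \<inter> {..<pdeg u}) # splitL us {x. x + pdeg u \<in> I}"

fun joinL :: "(rtree option \<times> nat set) list \<Rightarrow> nat set" where
  "joinL [] = {}"
| "joinL ((u, J) # ps) = J \<union> (\<lambda>x. x + pdeg u) ` joinL ps"

lemma length_splitL[simp]: "length (splitL us I) = length us"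
  by (induction us arbitrary: I) auto

lemma graft_one: "graft [x] = x"
  by (cases x) (auto simp: graft_def)

lemma pcontract_graft_aux:
  "filter (\<lambda>x. x \<noteq> None) (map pc (zip us (splitL us I))) =
   filter (\<lambda>x. x \<noteq> None) (contract_list (map the (filter (\<lambda>x. x \<noteq> None) us)) I)"
proof (induction us arbitrary: I)
  case Nil then show ?case by simp
next
  case (Cons u us)
  show ?case
  proof (cases u)
    case None
    then show ?thesis using Cons[of I] by (simp add: pc_def pdeg_def)
  next
    case (Some t)
    have "pc (u, I \<inter> {..<pdeg u}) = contract t I"
      using Some by (simp add: pc_def pcontract_def pdeg_def contract_restrict)
    then show ?thesis using Some Cons[of "{x. x + tdeg t \<in> I}"] by (simp add: pdeg_def)
  qed
qed

lemma pcontract_graft: "pcontract (graft us) I = graft (map pc (zip us (splitL us I)))"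
proof -
  let ?ys = "map the (filter (\<lambda>x. x \<noteq> None) us)"
  have a: "pcontract (graft us) I = graft (contract_list ?ys I)"
  proof (cases "?ys = []")
    case True then show ?thesis by (simp add: graft_def)
  next
    case False
    show ?thesis
    proof (cases "length ?ys = 1")
      case True
      then obtain y where y: "?ys = [y]" by (cases ?ys) auto
      then have "graft us = Some y" by (simp add: graft_def)
      then show ?thesis using y by (simp add: pcontract_def graft_one)
    next
      case False
      then have "graft us = Some (Nd ?ys)" using \<open>?ys \<noteq> []\<close> by (simp add: graft_def Let_def)
      then show ?thesis by (simp add: pcontract_def)
    qed
  qed
  show ?thesis unfolding a by (rule graft_filter, rule pcontract_graft_aux[symmetric])
qed




lemma joinL_split: "joinL (zip us (splitL us I)) = I \<inter> {..<sum_list (map pdeg us)}"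
proof (induction us arbitrary: I)
  case Nil then show ?case by simp
next
  case (Cons u us)
  let ?d = "pdeg u" and ?S = "sum_list (map pdeg us)"
  have "joinL (zip (u # us) (splitL (u # us) I)) =
        (I \<inter> {..<?d}) \<union> (\<lambda>x. x + ?d) ` ({x. x + ?d \<in> I} \<inter> {..<?S})"
    using Cons[of "{x. x + ?d \<in> I}"] by simp
  also have "\<dots> = I \<inter> {..<?d + ?S}"
  proof
    show "I \<inter> {..<?d + ?S} \<subseteq> (I \<inter> {..<?d}) \<union> (\<lambda>x. x + ?d) ` ({x. x + ?d \<in> I} \<inter> {..<?S})"
    proof
      fix x assume "x \<in> I \<inter> {..<?d + ?S}"
      then show "x \<in> (I \<inter> {..<?d}) \<union> (\<lambda>x. x + ?d) ` ({x. x + ?d \<in> I} \<inter> {..<?S})"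
        by (cases "x < ?d") (auto intro!: image_eqI[where x = "x - ?d"])
    qed
  next
    show "(I \<inter> {..<?d}) \<union> (\<lambda>x. x + ?d) ` ({x. x + ?d \<in> I} \<inter> {..<?S}) \<subseteq> I \<inter> {..<?d + ?S}"
    proof
      fix x assume "x \<in> (I \<inter> {..<?d}) \<union> (\<lambda>x. x + ?d) ` ({x. x + ?d \<in> I} \<inter> {..<?S})"
      then show "x \<in> I \<inter> {..<?d + ?S}"
      proof
        assume "x \<in> I \<inter> {..<?d}" then show ?thesis by simp
      next
        assume "x \<in> (\<lambda>x. x + ?d) ` ({x. x + ?d \<in> I} \<inter> {..<?S})"
        then obtain y where "x = y + ?d" "y + ?d \<in> I" "y < ?S" by blast
        then show ?thesis by simp
      qed
    qed
  qed
  finally show ?case by simp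
qed

lemma split_joinL: "\<forall>p\<in>set ps. snd p \<subseteq> {..<pdeg (fst p)} \<Longrightarrow> splitL (map fst ps) (joinL ps) = map snd ps"
proof (induction ps)
  case Nil then show ?case by simp
next
  case (Cons p ps)
  obtain u J where p: "p = (u, J)" by fastforce
  have J: "J \<subseteq> {..<pdeg u}" using Cons p by auto
  have a: "(J \<union> (\<lambda>x. x + pdeg u) ` joinL ps) \<inter> {..<pdeg u} = J" using J by auto
  have b: "{x. x + pdeg u \<in> J \<union> (\<lambda>x. x + pdeg u) ` joinL ps} = joinL ps" using J by auto
  show ?case using Cons a b p by simp
qed

lemma joinL_sub: "\<forall>p\<in>set ps. snd p \<subseteq> {..<pdeg (fst p)} \<Longrightarrow> joinL ps \<subseteq> {..<sum_list (map (pdeg \<circ> fst) ps)}"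
proof (induction ps)
  case Nil then show ?case by simp
next
  case (Cons p ps)
  obtain u J where p: "p = (u, J)" by fastforce
  have J: "J \<subseteq> {..<pdeg u}" using Cons.prems p by auto
  have IH: "joinL ps \<subseteq> {..<sum_list (map (pdeg \<circ> fst) ps)}" using Cons by (simp add: o_def)
  show ?case
  proof
    fix x assume "x \<in> joinL (p # ps)"
    then have "x \<in> J \<or> (\<exists>y\<in>joinL ps. x = y + pdeg u)" using p by auto
    then show "x \<in> {..<sum_list (map (pdeg \<circ> fst) (p # ps))}"
    proof
      assume "x \<in> J" then show ?thesis using J p by auto
    next
      assume "\<exists>y\<in>joinL ps. x = y + pdeg u"
      then obtain y where "y \<in> joinL ps" "x = y + pdeg u" by blast
      then show ?thesis using IH p by auto
    qed
  qed
qed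

lemma splitL_sub: "\<forall>p\<in>set (zip us (splitL us I)). snd p \<subseteq> {..<pdeg (fst p)}"
  by (induction us arbitrary: I) auto




lemma prod_sum_lists:
  fixes f :: "nat \<Rightarrow> 'b \<Rightarrow> 'a::comm_semiring_1"
  shows "(\<Prod>i<k. \<Sum>x\<in>A i. f i x) = (\<Sum>xs\<in>{xs. length xs = k \<and> (\<forall>i<k. xs!i \<in> A i)}. \<Prod>i<k. f i (xs!i))"
proof (induction k arbitrary: A f)
  case 0
  have "{xs. length xs = 0 \<and> (\<forall>i<0. xs!i \<in> A i)} = {[]}" by auto
  then show ?case by simp
next
  case (Suc k)
  let ?S = "{xs. length xs = k \<and> (\<forall>i<k. xs!i \<in> A (Suc i))}"
  have inj: "inj_on (\<lambda>(x, xs). x # xs) (A 0 \<times> ?S)" by (auto simp: inj_on_def)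
  have e: "{xs. length xs = Suc k \<and> (\<forall>i<Suc k. xs!i \<in> A i)} = (\<lambda>(x, xs). x # xs) ` (A 0 \<times> ?S)"
  proof
    show "{xs. length xs = Suc k \<and> (\<forall>i<Suc k. xs!i \<in> A i)} \<subseteq> (\<lambda>(x, xs). x # xs) ` (A 0 \<times> ?S)"
    proof
      fix xs assume a: "xs \<in> {xs. length xs = Suc k \<and> (\<forall>i<Suc k. xs!i \<in> A i)}"
      then obtain y ys where xs: "xs = y # ys" by (cases xs) auto
      have "y \<in> A 0" using a xs by auto
      moreover have "ys \<in> ?S" using a xs by auto
      ultimately show "xs \<in> (\<lambda>(x, xs). x # xs) ` (A 0 \<times> ?S)" using xs by force
    qed
  next
    show "(\<lambda>(x, xs). x # xs) ` (A 0 \<times> ?S) \<subseteq> {xs. length xs = Suc k \<and> (\<forall>i<Suc k. xs!i \<in> A i)}"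
      by (auto simp: less_Suc_eq_0_disj)
  qed
  have "(\<Prod>i<Suc k. \<Sum>x\<in>A i. f i x) = (\<Sum>x\<in>A 0. f 0 x) * (\<Prod>i<k. \<Sum>x\<in>A (Suc i). f (Suc i) x)"
    by (simp del: prod.lessThan_Suc add: prod.lessThan_Suc_shift)
  also have "\<dots> = (\<Sum>x\<in>A 0. f 0 x) * (\<Sum>xs\<in>?S. \<Prod>i<k. f (Suc i) (xs!i))"
    using Suc[where A="\<lambda>i. A (Suc i)" and f="\<lambda>i. f (Suc i)"] by simp
  also have "\<dots> = (\<Sum>x\<in>A 0. \<Sum>xs\<in>?S. f 0 x * (\<Prod>i<k. f (Suc i) (xs!i)))"
    by (simp add: sum_product)
  also have "\<dots> = (\<Sum>(x, xs)\<in>A 0 \<times> ?S. f 0 x * (\<Prod>i<k. f (Suc i) (xs!i)))"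
    by (simp add: sum.cartesian_product)
  also have "\<dots> = (\<Sum>(x, xs)\<in>A 0 \<times> ?S. \<Prod>i<Suc k. f i ((x # xs)!i))"
    by (simp del: prod.lessThan_Suc add: prod.lessThan_Suc_shift)
  also have "\<dots> = (\<Sum>ys\<in>(\<lambda>(x, xs). x # xs) ` (A 0 \<times> ?S). \<Prod>i<Suc k. f i (ys!i))"
    by (subst sum.reindex[OF inj]) (simp add: case_prod_beta)
  finally show ?case using e by simp
qed

definition Cn :: "nat \<Rightarrow> nat \<Rightarrow> nat list set" where
  "Cn k n = {ns. length ns = k \<and> sum_list ns = n}"

lemma Cn_finite: "finite (Cn k n)"
proof -
  have "Cn k n \<subseteq> {ns. set ns \<subseteq> {..n} \<and> length ns = k}"
    by (auto simp: Cn_def member_le_sum_list)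
  then show ?thesis using finite_lists_length_eq[of "{..n}"] finite_subset by blast
qed

lemma Cn_Suc: "Cn (Suc k) n = (\<lambda>(a, ns). a # ns) ` (SIGMA a:{..n}. Cn k (n - a))"
proof
  show "Cn (Suc k) n \<subseteq> (\<lambda>(a, ns). a # ns) ` (SIGMA a:{..n}. Cn k (n - a))"
  proof
    fix xs assume a: "xs \<in> Cn (Suc k) n"
    then obtain y ys where xs: "xs = y # ys" by (cases xs) (auto simp: Cn_def)
    then show "xs \<in> (\<lambda>(a, ns). a # ns) ` (SIGMA a:{..n}. Cn k (n - a))"
      using a by (force simp: Cn_def)
  qed
qed (auto simp: Cn_def)

lemma multinom: "(\<Sum>ns\<in>Cn k n. \<Prod>i<k. 1 / fact (ns!i) :: complex) = of_nat k ^ n / fact n"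
proof (induction k arbitrary: n)
  case 0
  have "Cn 0 n = (if n = 0 then {[]} else {})" by (auto simp: Cn_def)
  then show ?case by simp
next
  case (Suc k)
  have inj: "inj_on (\<lambda>(a, ns). a # ns) (SIGMA a:{..n}. Cn k (n - a))" by (auto simp: inj_on_def)
  have "(\<Sum>ns\<in>Cn (Suc k) n. \<Prod>i<Suc k. 1 / fact (ns!i) :: complex)
      = (\<Sum>(a, ns)\<in>(SIGMA a:{..n}. Cn k (n - a)). \<Prod>i<Suc k. 1 / fact ((a # ns)!i))"
    unfolding Cn_Suc by (subst sum.reindex[OF inj]) (simp add: case_prod_beta)
  also have "\<dots> = (\<Sum>a\<le>n. \<Sum>ns\<in>Cn k (n - a). 1 / fact a * (\<Prod>i<k. 1 / fact (ns!i)))"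
    by (subst sum.Sigma[symmetric]) (auto simp del: prod.lessThan_Suc simp: Cn_finite prod.lessThan_Suc_shift)
  also have "\<dots> = (\<Sum>a\<le>n. 1 / fact a * (of_nat k ^ (n - a) / fact (n - a)))"
  proof (rule sum.cong[OF refl])
    fix a assume "a \<in> {..n}"
    have "(\<Sum>ns\<in>Cn k (n - a). 1 / fact a * (\<Prod>i<k. 1 / fact (ns!i))) = 1 / fact a * (\<Sum>ns\<in>Cn k (n - a). (\<Prod>i<k. 1 / fact (ns!i) :: complex))"
      by (rule sum_distrib_left[symmetric])
    then show "(\<Sum>ns\<in>Cn k (n - a). 1 / fact a * (\<Prod>i<k. 1 / fact (ns!i))) = 1 / fact a * (of_nat k ^ (n - a) / fact (n - a) :: complex)"
      using Suc[of "n - a"] by simp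
  qed
  also have "\<dots> = (\<Sum>a\<le>n. of_nat (n choose a) * 1 ^ a * of_nat k ^ (n - a)) / fact n"
    by (simp add: sum_divide_distrib binomial_fact field_simps)
  also have "\<dots> = (1 + of_nat k) ^ n / fact n" by (simp add: binomial_ring)
  finally show ?case by (simp add: add.commute)
qed




definition MT :: "nat \<Rightarrow> rtree option \<Rightarrow> (rtree option \<times> nat set) set" where
  "MT N T = {p. inP (fst p) \<and> pdeg (fst p) = N \<and> snd p \<subseteq> {..<N} \<and> pc p = T}"

definition Wf :: "nat \<Rightarrow> nat \<Rightarrow> rtree option \<Rightarrow> complex" where
  "Wf k n T = (\<Sum>p\<in>MT (pdeg T + n) T. alpha k (fst p))"

lemma MT_finite: "finite (MT N T)"
proof -
  have "MT N T \<subseteq> {U. inP U \<and> pdeg U \<le> N} \<times> Pow {..<N}" by (auto simp: MT_def)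
  then show ?thesis using finite_P_le finite_subset by blast
qed

lemma alpha_omega: "2 \<le> k \<Longrightarrow> inP U \<Longrightarrow> (\<Sum>us\<in>Om k U. \<Prod>i<k. alpha k (us!i)) = of_nat k ^ pdeg U * alpha k U"
  using alpha_exp[of k] by (simp add: is_exp_series_def omega_coeff_Om)

lemma all_set_nth: "(\<And>i. i < length xs \<Longrightarrow> P (xs!i)) \<Longrightarrow> \<forall>p\<in>set xs. P p"
  by (metis in_set_conv_nth)

lemma sum_list_map_nth: "sum_list (map f xs) = (\<Sum>i<length xs. f (xs!i))"
  by (simp add: sum_list_sum_nth atLeast0LessThan)

lemma sum_list_diff:
  "(\<forall>p\<in>set ps. b p \<le> (a p::nat)) \<Longrightarrow> sum_list (map (\<lambda>p. a p - b p) ps) + sum_list (map b ps) = sum_list (map a ps)"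
  by (induction ps) auto

lemma card_le_deg: "snd p \<subseteq> {..<pdeg (fst p)} \<Longrightarrow> card (snd p) \<le> pdeg (fst p)"
  using card_mono[of "{..<pdeg (fst p)}" "snd p"] by simp

lemma pc_deg: "snd p \<subseteq> {..<pdeg (fst p)} \<Longrightarrow> pdeg (pc p) = card (snd p)"
  by (simp add: pc_def pcontract_deg)

lemma key_identity:
  assumes k: "2 \<le> k" and T: "inP T"
  shows "of_nat k ^ (pdeg T + n) * Wf k n T = (\<Sum>ts\<in>Om k T. \<Sum>ns\<in>Cn k n. \<Prod>i<k. Wf k (ns!i) (ts!i))"
proof -
  define N where "N = pdeg T + n"
  define R where "R = {x. length (fst x) = k \<and> list_all inP (fst x) \<and> sum_list (map pdeg (fst x)) = N \<and>
                        snd x \<subseteq> {..<N} \<and> pcontract (graft (fst x)) (snd x) = T}"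
  define Q where "Q = {ps. length ps = k \<and> (\<forall>i<k. inP (fst (ps!i)) \<and> snd (ps!i) \<subseteq> {..<pdeg (fst (ps!i))}) \<and>
                        sum_list (map (pdeg \<circ> fst) ps) = N \<and> graft (map pc ps) = T}"
  define h where "h = (\<lambda>ps::(rtree option \<times> nat set) list. \<Prod>i<k. alpha k (fst (ps!i)))"
  define key where "key = (\<lambda>ps. (map pc ps, map (\<lambda>p. pdeg (fst p) - card (snd p)) ps))"
  define L where "L = (\<lambda>ts ns. {ps. length ps = k \<and> (\<forall>i<k. ps!i \<in> MT (pdeg (ts!i) + ns!i) (ts!i))})"

  have s1: "of_nat k ^ N * Wf k n T = (\<Sum>p\<in>MT N T. \<Sum>us\<in>Om k (fst p). \<Prod>i<k. alpha k (us!i))"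
    unfolding Wf_def N_def[symmetric] sum_distrib_left
    by (intro sum.cong refl) (simp add: MT_def alpha_omega[OF k])

  have finR: "finite R"
  proof -
    have "R \<subseteq> {us. set us \<subseteq> {U. inP U \<and> pdeg U \<le> N} \<and> length us = k} \<times> Pow {..<N}"
    proof
      fix x assume x: "x \<in> R"
      have "\<forall>u\<in>set (fst x). pdeg u \<le> N"
        using x member_le_sum_list[of _ "map pdeg (fst x)"] by (auto simp: R_def)
      then show "x \<in> {us. set us \<subseteq> {U. inP U \<and> pdeg U \<le> N} \<and> length us = k} \<times> Pow {..<N}"
        using x by (auto simp: R_def list_all_iff mem_Times_iff)
    qed
    then show ?thesis
      using finite_lists_length_eq[OF finite_P_le] finite_subset by blast
  qed

  have s2: "(\<Sum>p\<in>MT N T. \<Sum>us\<in>Om k (fst p). \<Prod>i<k. alpha k (us!i)) = (\<Sum>x\<in>R. \<Prod>i<k. alpha k (fst x ! i))"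
  proof -
    have img: "(\<lambda>x. (graft (fst x), snd x)) ` R \<subseteq> MT N T"
    proof
      fix y assume "y \<in> (\<lambda>x. (graft (fst x), snd x)) ` R"
      then obtain x where x: "x \<in> R" "y = (graft (fst x), snd x)" by blast
      then show "y \<in> MT N T"
        by (auto simp: R_def MT_def inP_graft pdeg_graft pc_def)
    qed
    have "(\<Sum>x\<in>R. \<Prod>i<k. alpha k (fst x ! i)) =
          (\<Sum>y\<in>MT N T. \<Sum>x\<in>{x \<in> R. (graft (fst x), snd x) = y}. \<Prod>i<k. alpha k (fst x ! i))"
      by (rule sum.group[symmetric, OF finR MT_finite img])
    also have "\<dots> = (\<Sum>p\<in>MT N T. \<Sum>us\<in>Om k (fst p). \<Prod>i<k. alpha k (us!i))"
    proof (rule sum.cong[OF refl])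
      fix y assume y: "y \<in> MT N T"
      have e: "{x \<in> R. (graft (fst x), snd x) = y} = (\<lambda>us. (us, snd y)) ` Om k (fst y)"
      proof
        show "{x \<in> R. (graft (fst x), snd x) = y} \<subseteq> (\<lambda>us. (us, snd y)) ` Om k (fst y)"
        proof
          fix x assume x: "x \<in> {x \<in> R. (graft (fst x), snd x) = y}"
          then have "fst x \<in> Om k (fst y)" by (auto simp: R_def Om_def)
          moreover have "x = (fst x, snd y)" using x by auto
          ultimately show "x \<in> (\<lambda>us. (us, snd y)) ` Om k (fst y)" by blast
        qed
      next
        show "(\<lambda>us. (us, snd y)) ` Om k (fst y) \<subseteq> {x \<in> R. (graft (fst x), snd x) = y}"
        proof
          fix x assume "x \<in> (\<lambda>us. (us, snd y)) ` Om k (fst y)"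
          then obtain us where us: "us \<in> Om k (fst y)" "x = (us, snd y)" by blast
          have "sum_list (map pdeg us) = N" using Om_deg[OF us(1)] y by (simp add: MT_def)
          moreover have "graft us = fst y" using us by (simp add: Om_def)
          ultimately show "x \<in> {x \<in> R. (graft (fst x), snd x) = y}"
            using us y by (auto simp: R_def MT_def Om_def pc_def)
        qed
      qed
      have inj: "inj_on (\<lambda>us. (us, snd y)) (Om k (fst y))" by (auto simp: inj_on_def)
      show "(\<Sum>x\<in>{x \<in> R. (graft (fst x), snd x) = y}. \<Prod>i<k. alpha k (fst x ! i)) =
            (\<Sum>us\<in>Om k (fst y). \<Prod>i<k. alpha k (us!i))"
        unfolding e by (subst sum.reindex[OF inj]) simp
    qed
    finally show ?thesis by simp
  qed

  have bij: "bij_betw (\<lambda>x. zip (fst x) (splitL (fst x) (snd x))) R Q"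
  proof (rule bij_betw_byWitness[where f' = "\<lambda>ps. (map fst ps, joinL ps)"])
    show "\<forall>x\<in>R. (map fst (zip (fst x) (splitL (fst x) (snd x))), joinL (zip (fst x) (splitL (fst x) (snd x)))) = x"
    proof
      fix x assume x: "x \<in> R"
      have "joinL (zip (fst x) (splitL (fst x) (snd x))) = snd x"
        using x by (auto simp: joinL_split R_def)
      then show "(map fst (zip (fst x) (splitL (fst x) (snd x))), joinL (zip (fst x) (splitL (fst x) (snd x)))) = x"
        by simp
    qed
    show "\<forall>ps\<in>Q. zip (fst (map fst ps, joinL ps)) (splitL (fst (map fst ps, joinL ps)) (snd (map fst ps, joinL ps))) = ps"
    proof
      fix ps assume ps: "ps \<in> Q"
      have "\<forall>p\<in>set ps. snd p \<subseteq> {..<pdeg (fst p)}" by (rule all_set_nth) (use ps in \<open>auto simp: Q_def\<close>)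
      then show "zip (fst (map fst ps, joinL ps)) (splitL (fst (map fst ps, joinL ps)) (snd (map fst ps, joinL ps))) = ps"
        by (simp add: split_joinL zip_map_fst_snd)
    qed
    show "(\<lambda>x. zip (fst x) (splitL (fst x) (snd x))) ` R \<subseteq> Q"
    proof
      fix ps assume "ps \<in> (\<lambda>x. zip (fst x) (splitL (fst x) (snd x))) ` R"
      then obtain x where x: "x \<in> R" "ps = zip (fst x) (splitL (fst x) (snd x))" by blast
      have len: "length ps = k" "length (fst x) = k" using x by (auto simp: R_def)
      have fst_nth: "fst (ps!i) = fst x ! i" if "i < k" for i using x len that by simp
      have "\<forall>i<k. inP (fst (ps!i))" using x(1) fst_nth len by (auto simp: R_def list_all_length)
      moreover have "\<forall>i<k. snd (ps!i) \<subseteq> {..<pdeg (fst (ps!i))}"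
        using splitL_sub[of "fst x" "snd x"] x len nth_mem by (metis (no_types, lifting))
      moreover have "map fst ps = fst x" using x by simp
      then have "sum_list (map (pdeg \<circ> fst) ps) = N" using x(1) by (simp add: R_def flip: map_map)
      moreover have "graft (map pc ps) = T" using x by (simp add: R_def pcontract_graft)
      ultimately show "ps \<in> Q" using len by (simp add: Q_def)
    qed
    show "(\<lambda>ps. (map fst ps, joinL ps)) ` Q \<subseteq> R"
    proof
      fix x assume "x \<in> (\<lambda>ps. (map fst ps, joinL ps)) ` Q"
      then obtain ps where ps: "ps \<in> Q" "x = (map fst ps, joinL ps)" by blast
      have sub: "\<forall>p\<in>set ps. snd p \<subseteq> {..<pdeg (fst p)}" by (rule all_set_nth) (use ps in \<open>auto simp: Q_def\<close>)
      have "list_all inP (map fst ps)" using ps by (auto simp: Q_def list_all_length)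
      moreover have "sum_list (map pdeg (map fst ps)) = N" using ps by (simp add: Q_def)
      moreover have "joinL ps \<subseteq> {..<N}" using joinL_sub[OF sub] ps by (simp add: Q_def)
      moreover have "pcontract (graft (map fst ps)) (joinL ps) = T"
        using ps by (simp add: pcontract_graft split_joinL[OF sub] zip_map_fst_snd Q_def)
      ultimately show "x \<in> R" using ps by (simp add: R_def Q_def)
    qed
  qed

  have s3: "(\<Sum>x\<in>R. \<Prod>i<k. alpha k (fst x ! i)) = (\<Sum>ps\<in>Q. h ps)"
  proof -
    have "(\<Sum>x\<in>R. h (zip (fst x) (splitL (fst x) (snd x)))) = (\<Sum>ps\<in>Q. h ps)"
      by (rule sum.reindex_bij_betw[OF bij])
    moreover have "h (zip (fst x) (splitL (fst x) (snd x))) = (\<Prod>i<k. alpha k (fst x ! i))" if "x \<in> R" for x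
      unfolding h_def using that by (intro prod.cong refl) (simp add: R_def)
    ultimately show ?thesis by simp
  qed

  have finQ: "finite Q"
    using bij bij_betw_finite finR by blast

  have imgQ: "key ` Q \<subseteq> Om k T \<times> Cn k n"
  proof
    fix y assume "y \<in> key ` Q"
    then obtain ps where ps: "ps \<in> Q" "y = key ps" by blast
    have sub: "\<forall>p\<in>set ps. snd p \<subseteq> {..<pdeg (fst p)}" by (rule all_set_nth) (use ps in \<open>auto simp: Q_def\<close>)
    have inp: "\<forall>p\<in>set ps. inP (fst p)" by (rule all_set_nth) (use ps in \<open>auto simp: Q_def\<close>)
    have "map pc ps \<in> Om k T"
      using ps inp by (auto simp: Q_def Om_def list_all_iff pc_def intro: pcontract_inP)
    moreover have "sum_list (map (\<lambda>p. pdeg (fst p) - card (snd p)) ps) = n"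
    proof -
      have a: "sum_list (map (\<lambda>p. pdeg (fst p) - card (snd p)) ps) + sum_list (map (\<lambda>p. card (snd p)) ps) = N"
        using sum_list_diff[of ps "\<lambda>p. card (snd p)" "\<lambda>p. pdeg (fst p)"] sub card_le_deg ps
        by (simp add: Q_def o_def)
      have "sum_list (map (\<lambda>p. card (snd p)) ps) = sum_list (map pdeg (map pc ps))"
        using sub by (simp add: o_def pc_deg cong: map_cong)
      also have "\<dots> = pdeg (graft (map pc ps))" by (simp only: pdeg_graft)
      also have "\<dots> = pdeg T" using ps by (simp add: Q_def)
      finally show ?thesis using a N_def by simp
    qed
    ultimately show "y \<in> Om k T \<times> Cn k n" using ps by (simp add: key_def Cn_def Q_def)
  qed

  have s4: "(\<Sum>ps\<in>Q. h ps) = (\<Sum>y\<in>Om k T \<times> Cn k n. \<Sum>ps\<in>{ps \<in> Q. key ps = y}. h ps)"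
    by (rule sum.group[symmetric, OF finQ _ imgQ]) (simp add: Om_finite Cn_finite)

  have s5: "(\<Sum>ps\<in>{ps \<in> Q. key ps = (ts, ns)}. h ps) = (\<Prod>i<k. Wf k (ns!i) (ts!i))"
    if y: "ts \<in> Om k T" "ns \<in> Cn k n" for ts ns
  proof -
    have lts: "length ts = k" and lns: "length ns = k" using y by (auto simp: Om_def Cn_def)
    have e: "{ps \<in> Q. key ps = (ts, ns)} = L ts ns"
    proof
      show "{ps \<in> Q. key ps = (ts, ns)} \<subseteq> L ts ns"
      proof
        fix ps assume ps: "ps \<in> {ps \<in> Q. key ps = (ts, ns)}"
        have len: "length ps = k" using ps by (simp add: Q_def)
        have "ps!i \<in> MT (pdeg (ts!i) + ns!i) (ts!i)" if i: "i < k" for i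
        proof -
          have a: "ts!i = pc (ps!i)" "ns!i = pdeg (fst (ps!i)) - card (snd (ps!i))"
            using ps i len by (auto simp: key_def)
          have sub: "snd (ps!i) \<subseteq> {..<pdeg (fst (ps!i))}" and inp: "inP (fst (ps!i))"
            using ps i by (auto simp: Q_def)
          have "pdeg (ts!i) = card (snd (ps!i))" using a pc_deg[OF sub] by simp
          then have "pdeg (fst (ps!i)) = pdeg (ts!i) + ns!i" using a card_le_deg[OF sub] by simp
          then show ?thesis using a sub inp by (simp add: MT_def)
        qed
        then show "ps \<in> L ts ns" using len by (simp add: L_def)
      qed
    next
      show "L ts ns \<subseteq> {ps \<in> Q. key ps = (ts, ns)}"
      proof
        fix ps assume ps: "ps \<in> L ts ns"
        have len: "length ps = k" using ps by (simp add: L_def)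
        have m: "\<And>i. i < k \<Longrightarrow> inP (fst (ps!i)) \<and> pdeg (fst (ps!i)) = pdeg (ts!i) + ns!i \<and>
                   snd (ps!i) \<subseteq> {..<pdeg (fst (ps!i))} \<and> pc (ps!i) = ts!i"
          using ps by (auto simp: L_def MT_def)
        have mpc: "map pc ps = ts" by (rule nth_equalityI) (use len lts m in auto)
        have mns: "map (\<lambda>p. pdeg (fst p) - card (snd p)) ps = ns"
        proof (rule nth_equalityI)
          show "length (map (\<lambda>p. pdeg (fst p) - card (snd p)) ps) = length ns" using len lns by simp
          fix i assume "i < length (map (\<lambda>p. pdeg (fst p) - card (snd p)) ps)"
          then have i: "i < k" using len by simp
          have "card (snd (ps!i)) = pdeg (ts!i)" using m[OF i] pc_deg[of "ps!i"] by metis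
          then show "map (\<lambda>p. pdeg (fst p) - card (snd p)) ps ! i = ns ! i" using m[OF i] i len by simp
        qed
        have "sum_list (map (pdeg \<circ> fst) ps) = (\<Sum>i<k. pdeg (ts!i) + ns!i)"
          unfolding sum_list_map_nth using len m by simp
        also have "\<dots> = sum_list (map pdeg ts) + sum_list ns"
          by (simp add: sum.distrib sum_list_map_nth lts lns sum_list_sum_nth atLeast0LessThan)
        also have "\<dots> = N" using y Om_deg by (simp add: N_def Cn_def)
        finally have "sum_list (map (pdeg \<circ> fst) ps) = N" .
        moreover have "graft (map pc ps) = T" using mpc y by (simp add: Om_def)
        moreover have "\<forall>i<k. inP (fst (ps!i)) \<and> snd (ps!i) \<subseteq> {..<pdeg (fst (ps!i))}" using m by blast
        ultimately show "ps \<in> {ps \<in> Q. key ps = (ts, ns)}"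
          using len mpc mns unfolding Q_def key_def by blast
      qed
    qed
    have "(\<Sum>ps\<in>L ts ns. h ps) = (\<Prod>i<k. \<Sum>p\<in>MT (pdeg (ts!i) + ns!i) (ts!i). alpha k (fst p))"
      unfolding L_def h_def
      by (rule prod_sum_lists[where f = "\<lambda>i p. alpha k (fst p)" and A = "\<lambda>i. MT (pdeg (ts!i) + ns!i) (ts!i)", symmetric])
    then show ?thesis unfolding e by (simp add: Wf_def)
  qed

  have "of_nat k ^ N * Wf k n T = (\<Sum>y\<in>Om k T \<times> Cn k n. \<Sum>ps\<in>{ps \<in> Q. key ps = y}. h ps)"
    using s1 s2 s3 s4 by simp
  also have "\<dots> = (\<Sum>(ts, ns)\<in>Om k T \<times> Cn k n. \<Prod>i<k. Wf k (ns!i) (ts!i))"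
    by (intro sum.cong refl) (auto simp: s5)
  also have "\<dots> = (\<Sum>ts\<in>Om k T. \<Sum>ns\<in>Cn k n. \<Prod>i<k. Wf k (ns!i) (ts!i))"
    by (simp add: sum.cartesian_product)
  finally show ?thesis by (simp add: N_def)
qed




lemma nat_list_single:
  fixes ns :: "nat list"
  assumes len: "length ns = k" and s: "sum_list ns = n" and j: "j < k" and d: "n \<le> ns!j"
  shows "ns = (replicate k 0)[j := n]"
proof -
  have s': "(\<Sum>i<k. ns!i) = n" using s len by (simp add: sum_list_sum_nth atLeast0LessThan)
  have z: "ns!i = 0" if i: "i < k" "i \<noteq> j" for i
  proof -
    have "(\<Sum>i\<in>{i,j}. ns!i) \<le> (\<Sum>i<k. ns!i)"
      by (rule sum_mono2) (use i j in auto)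
    then show ?thesis using s' d i by simp
  qed
  have "ns!j \<le> n" using s' j by (metis lessThan_iff member_le_sum finite_lessThan zero_le)
  then have nj: "ns!j = n" using d by simp
  show ?thesis
  proof (rule nth_equalityI)
    show "length ns = length ((replicate k 0)[j := n])" using len by simp
    fix i assume "i < length ns"
    then show "ns ! i = (replicate k 0)[j := n] ! i"
      using z len nj by (cases "i = j") auto
  qed
qed

lemma Om_entry_le: "ts \<in> Om k T \<Longrightarrow> i < k \<Longrightarrow> pdeg (ts!i) \<le> pdeg T"
  using Om_deg[of ts k T] member_le_sum_list[of "pdeg (ts!i)" "map pdeg ts"]
  by (auto simp: Om_def)

lemma Cn_entry_le: "ns \<in> Cn k n \<Longrightarrow> i < k \<Longrightarrow> ns!i \<le> n"
  using member_le_sum_list[of "ns!i" ns] by (auto simp: Cn_def)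

lemma uniq_rec:
  fixes X Y :: "nat \<Rightarrow> rtree option \<Rightarrow> complex"
  assumes k: "2 \<le> k"
    and EX: "\<And>n T. inP T \<Longrightarrow> of_nat k ^ (pdeg T + n) * X n T = (\<Sum>ts\<in>Om k T. \<Sum>ns\<in>Cn k n. \<Prod>i<k. X (ns!i) (ts!i))"
    and EY: "\<And>n T. inP T \<Longrightarrow> of_nat k ^ (pdeg T + n) * Y n T = (\<Sum>ts\<in>Om k T. \<Sum>ns\<in>Cn k n. \<Prod>i<k. Y (ns!i) (ts!i))"
    and B0: "\<And>T. inP T \<Longrightarrow> X 0 T = Y 0 T"
    and X0: "X 0 None = 1" and Y0: "Y 0 None = 1"
    and B1: "X 1 None = Y 1 None"
  shows "inP T \<Longrightarrow> X n T = Y n T"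
proof (induction "n + pdeg T" arbitrary: n T rule: less_induct)
  case less
  note T = less.prems
  show ?case
  proof (cases "n = 0 \<or> (n = 1 \<and> T = None)")
    case True
    then show ?thesis using B0 B1 T by auto
  next
    case False
    define N where "N = pdeg T + n"
    have N2: "N \<ge> 2"
    proof -
      have "n \<ge> 1" using False by auto
      moreover have "T \<noteq> None \<or> n \<ge> 2" using False by auto
      moreover have "T \<noteq> None \<Longrightarrow> pdeg T \<ge> 1" using T inP_deg0 by fastforce
      ultimately show ?thesis unfolding N_def by linarith
    qed
    define D where "D = (\<lambda>y::rtree option list \<times> nat list. (\<Prod>i<k. X (snd y!i) (fst y!i)) - (\<Prod>i<k. Y (snd y!i) (fst y!i)))"
    define f where "f = (\<lambda>j. ((replicate k None)[j := T], (replicate k (0::nat))[j := n]))"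
    define B where "B = f ` {..<k}"
    have fin: "finite (Om k T \<times> Cn k n)" by (simp add: Om_finite Cn_finite)
    have BS: "B \<subseteq> Om k T \<times> Cn k n"
    proof
      fix y assume "y \<in> B"
      then obtain j where j: "j < k" "y = f j" by (auto simp: B_def)
      have "(replicate k 0)[j := n] \<in> Cn k n"
        using j by (simp add: Cn_def sum_list_update)
      then show "y \<in> Om k T \<times> Cn k n" using Om_single[OF T j(1)] j by (simp add: f_def)
    qed
    have e1: "of_nat k ^ N * (X n T - Y n T) = (\<Sum>y\<in>Om k T \<times> Cn k n. D y)"
      unfolding D_def N_def right_diff_distrib EX[OF T] EY[OF T]
      by (simp add: sum.cartesian_product sum_subtractf case_prod_beta)
    have e2: "(\<Sum>y\<in>Om k T \<times> Cn k n. D y) = (\<Sum>y\<in>B. D y)"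
    proof (rule sum.mono_neutral_right[OF fin BS], rule ballI)
      fix y assume y: "y \<in> Om k T \<times> Cn k n - B"
      obtain ts ns where yy: "y = (ts, ns)" by fastforce
      have ts: "ts \<in> Om k T" and ns: "ns \<in> Cn k n" using y yy by auto
      have small: "ns!i + pdeg (ts!i) < N" if i: "i < k" for i
      proof (rule ccontr)
        assume "\<not> ns!i + pdeg (ts!i) < N"
        moreover have "ns!i \<le> n" "pdeg (ts!i) \<le> pdeg T"
          using Cn_entry_le[OF ns i] Om_entry_le[OF ts i] by auto
        ultimately have a: "ns!i = n" "pdeg (ts!i) = pdeg T" unfolding N_def by linarith+
        have "ts = (replicate k None)[i := T]" using Om_bad[OF ts i] a by simp
        moreover have "ns = (replicate k 0)[i := n]"
          using nat_list_single[of ns k n i] ns i a by (simp add: Cn_def)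
        ultimately have "y \<in> B" using yy i by (auto simp: B_def f_def)
        then show False using y by simp
      qed
      have "(\<Prod>i<k. X (ns!i) (ts!i)) = (\<Prod>i<k. Y (ns!i) (ts!i))"
      proof (rule prod.cong[OF refl])
        fix i assume "i \<in> {..<k}"
        then have i: "i < k" by simp
        show "X (ns!i) (ts!i) = Y (ns!i) (ts!i)"
          using less.hyps[of "ns!i" "ts!i"] small[OF i] Om_inP[OF ts i] unfolding N_def by simp
      qed
      then show "D y = 0" using yy by (simp add: D_def)
    qed
    have inj: "inj_on f {..<k}"
    proof (rule inj_onI)
      fix i j assume ij: "i \<in> {..<k}" "j \<in> {..<k}" "f i = f j"
      show "i = j"
      proof (rule ccontr)
        assume ne: "i \<noteq> j"
        have "(replicate k None)[i := T] ! i = (replicate k None)[j := T] ! i"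
             "(replicate k (0::nat))[i := n] ! i = (replicate k 0)[j := n] ! i"
          using ij by (auto simp: f_def)
        then have "T = None" "n = 0" using ij ne by auto
        then show False using N2 unfolding N_def by (simp add: pdeg_def)
      qed
    qed
    have e3: "(\<Sum>y\<in>B. D y) = of_nat k * (X n T - Y n T)"
    proof -
      have "(\<Sum>y\<in>B. D y) = (\<Sum>j<k. D (f j))" unfolding B_def by (rule sum.reindex[OF inj, unfolded o_def])
      also have "\<dots> = (\<Sum>j<k. X n T - Y n T)"
      proof (rule sum.cong[OF refl])
        fix j assume "j \<in> {..<k}"
        then have j: "j < k" by simp
        have "(\<Prod>i<k. X (snd (f j)!i) (fst (f j)!i)) = X n T"
          by (rule trans[OF prod_single_nontriv[OF j]]) (use j X0 in \<open>auto simp: f_def\<close>)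
        moreover have "(\<Prod>i<k. Y (snd (f j)!i) (fst (f j)!i)) = Y n T"
          by (rule trans[OF prod_single_nontriv[OF j]]) (use j Y0 in \<open>auto simp: f_def\<close>)
        ultimately show "D (f j) = X n T - Y n T" by (simp add: D_def)
      qed
      finally show ?thesis by simp
    qed
    have "(of_nat k ^ N - of_nat k) * (X n T - Y n T) = 0"
      using e1 e2 e3 by (simp add: algebra_simps)
    moreover have "(of_nat k ^ N - of_nat k :: complex) \<noteq> 0" using pow_gt[OF k N2]
      by (metis eq_iff_diff_eq_0 less_irrefl of_nat_eq_iff of_nat_power)
    ultimately show ?thesis by simp
  qed
qed

lemma Wf0: assumes T: "inP T" shows "Wf k 0 T = alpha k T"
proof -
  have "MT (pdeg T) T = {(T, {..<pdeg T})}"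
  proof
    show "MT (pdeg T) T \<subseteq> {(T, {..<pdeg T})}"
    proof
      fix p assume p: "p \<in> MT (pdeg T) T"
      then have sub: "snd p \<subseteq> {..<pdeg (fst p)}" and d: "pdeg (fst p) = pdeg T"
        and inp: "inP (fst p)" and pcT: "pc p = T" by (auto simp: MT_def)
      have "card (snd p) = pdeg T" using pc_deg[OF sub] pcT by simp
      then have "snd p = {..<pdeg (fst p)}" using sub d by (intro card_subset_eq) auto
      then have "pc p = fst p" using pcontract_full[OF inp] by (simp add: pc_def)
      then have "fst p = T" using pcT by simp
      then show "p \<in> {(T, {..<pdeg T})}" using \<open>snd p = _\<close> by (cases p) auto
    qed
    show "{(T, {..<pdeg T})} \<subseteq> MT (pdeg T) T"
      using T pcontract_full[OF T] by (simp add: MT_def pc_def)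
  qed
  then show ?thesis by (simp add: Wf_def)
qed

lemma alpha_None: "2 \<le> k \<Longrightarrow> alpha k None = 1" and alpha_Lf: "2 \<le> k \<Longrightarrow> alpha k (Some Lf) = 1"
  using alpha_exp[of k] by (auto simp: is_exp_series_def)

lemma Wf1None: assumes k: "2 \<le> k" shows "Wf k 1 None = 1"
proof -
  have "MT 1 None = {(Some Lf, {})}"
  proof
    show "MT 1 None \<subseteq> {(Some Lf, {})}"
    proof
      fix p assume p: "p \<in> MT 1 None"
      then have "fst p = Some Lf" using inP_deg1 by (auto simp: MT_def)
      moreover have "snd p \<subseteq> {..<1}" "pc p = None" using p by (auto simp: MT_def)
      ultimately have "snd p = {}" by (auto simp: pc_def pcontract_def split: if_splits)
      then show "p \<in> {(Some Lf, {})}" using \<open>fst p = Some Lf\<close> by (cases p) auto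
    qed
    show "{(Some Lf, {})} \<subseteq> MT 1 None"
      by (simp add: MT_def pc_def pcontract_def inP_def pdeg_def)
  qed
  then show ?thesis using alpha_Lf[OF k] by (simp add: Wf_def pdeg_def)
qed

lemma V_rec:
  assumes k: "2 \<le> k" and T: "inP T"
  shows "of_nat k ^ (pdeg T + n) * (alpha k T / fact n) =
         (\<Sum>ts\<in>Om k T. \<Sum>ns\<in>Cn k n. \<Prod>i<k. alpha k (ts!i) / fact (ns!i))"
proof -
  have "(\<Sum>ts\<in>Om k T. \<Sum>ns\<in>Cn k n. \<Prod>i<k. alpha k (ts!i) / fact (ns!i)) =
        (\<Sum>ts\<in>Om k T. (\<Prod>i<k. alpha k (ts!i)) * (\<Sum>ns\<in>Cn k n. \<Prod>i<k. 1 / fact (ns!i)))"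
    by (simp add: sum_distrib_left prod.distrib[symmetric])
  also have "\<dots> = (\<Sum>ts\<in>Om k T. \<Prod>i<k. alpha k (ts!i)) * (of_nat k ^ n / fact n)"
    by (simp only: multinom sum_distrib_right)
  also have "\<dots> = of_nat k ^ pdeg T * alpha k T * (of_nat k ^ n / fact n)"
    by (simp add: alpha_omega[OF k T])
  finally show ?thesis by (simp add: power_add)
qed

lemma Wf_formula:
  assumes k: "2 \<le> k" and T: "inP T"
  shows "Wf k n T = alpha k T / fact n"
proof -
  have "Wf k n T = (\<lambda>n T. alpha k T / fact n) n T"
  proof (rule uniq_rec[where X = "Wf k" and Y = "\<lambda>n T. alpha k T / fact n" and k = k])
    show "2 \<le> k" by (rule k)
    show "\<And>n T. inP T \<Longrightarrow> of_nat k ^ (pdeg T + n) * Wf k n T = (\<Sum>ts\<in>Om k T. \<Sum>ns\<in>Cn k n. \<Prod>i<k. Wf k (ns!i) (ts!i))"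
      by (rule key_identity[OF k])
    show "\<And>n T. inP T \<Longrightarrow> of_nat k ^ (pdeg T + n) * (alpha k T / fact n) = (\<Sum>ts\<in>Om k T. \<Sum>ns\<in>Cn k n. \<Prod>i<k. alpha k (ts!i) / fact (ns!i))"
      by (rule V_rec[OF k])
    show "\<And>T. inP T \<Longrightarrow> Wf k 0 T = alpha k T / fact 0" by (simp add: Wf0)
    show "Wf k 0 None = 1" using Wf0[of None] alpha_None[OF k] by (simp add: inP_def)
    show "alpha k None / fact 0 = 1" using alpha_None[OF k] by simp
    show "Wf k 1 None = alpha k None / fact 1" using Wf1None[OF k] alpha_None[OF k] by simp
    show "inP T" by (rule T)
  qed
  then show ?thesis by simp
qed




lemma exp_shift_has_sum:
  fixes z c :: "'a::{real_normed_field,banach}"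
  shows "((\<lambda>N. if d \<le> N then c / fact (N - d) * z ^ (N - d) else 0) has_sum c * exp z) UNIV"
proof -
  define G where "G = (\<lambda>N. if d \<le> N then c / fact (N - d) * z ^ (N - d) else 0)"
  have "((\<lambda>n. z^n /\<^sub>R fact n) has_sum exp z) UNIV"
    by (rule norm_summable_imp_has_sum[OF summable_norm_exp exp_converges])
  then have "((\<lambda>n. c * (z^n /\<^sub>R fact n)) has_sum c * exp z) UNIV"
    by (rule has_sum_cmult_right)
  moreover have "c * (z^n /\<^sub>R fact n) = c / fact n * z ^ n" for n
    by (simp add: scaleR_conv_of_real divide_inverse of_real_inverse)
  ultimately have h1: "((G \<circ> (\<lambda>n. n + d)) has_sum c * exp z) UNIV"
    by (simp add: G_def o_def)
  have "(G has_sum c * exp z) ((\<lambda>n. n + d) ` UNIV)"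
    using h1 by (subst has_sum_reindex) (auto simp: inj_on_def)
  moreover have "(G has_sum c * exp z) ((\<lambda>n. n + d) ` UNIV) \<longleftrightarrow> (G has_sum c * exp z) UNIV"
  proof (rule has_sum_cong_neutral)
    fix x assume "x \<in> UNIV - (\<lambda>n. n + d) ` UNIV"
    then have "x < d" by (metis Diff_iff UNIV_I image_eqI le_add_diff_inverse2 not_less add.commute)
    then show "G x = 0" by (simp add: G_def)
  qed auto
  ultimately show ?thesis by (simp add: G_def)
qed

definition PN :: "nat \<Rightarrow> rtree option set" where
  "PN N = {U. inP U \<and> pdeg U = N}"

lemma group_alpha:
  assumes k: "2 \<le> k" and T: "inP T"
  shows "(\<Sum>U\<in>PN N. alpha k U * of_nat (pbinom U T)) = (if pdeg T \<le> N then alpha k T / fact (N - pdeg T) else 0)"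
proof -
  define S where "S = (\<lambda>U. {I. I \<subseteq> {..<pdeg U} \<and> pcontract U I = T})"
  have finS: "finite (S U)" for U
    by (rule finite_subset[of _ "Pow {..<pdeg U}"]) (auto simp: S_def)
  have "(\<Sum>U\<in>PN N. alpha k U * of_nat (pbinom U T)) = (\<Sum>U\<in>PN N. \<Sum>I\<in>S U. alpha k U)"
    by (simp add: pbinom_def S_def mult.commute)
  also have "\<dots> = (\<Sum>p\<in>Sigma (PN N) S. alpha k (fst p))"
    by (subst sum.Sigma) (auto simp: finS finite_P_eq PN_def case_prod_beta)
  also have "Sigma (PN N) S = MT N T"
    by (auto simp: PN_def S_def MT_def pc_def)
  finally have e: "(\<Sum>U\<in>PN N. alpha k U * of_nat (pbinom U T)) = (\<Sum>p\<in>MT N T. alpha k (fst p))" .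
  show ?thesis
  proof (cases "pdeg T \<le> N")
    case True
    then obtain n where "N = pdeg T + n" by (metis le_add_diff_inverse)
    then show ?thesis using e Wf_formula[OF k T, of n] by (simp add: Wf_def)
  next
    case False
    have "MT N T = {}"
    proof (rule ccontr)
      assume "MT N T \<noteq> {}"
      then obtain p where p: "p \<in> MT N T" by blast
      then have "pdeg (pc p) = card (snd p)" by (intro pc_deg) (auto simp: MT_def)
      moreover have "card (snd p) \<le> N" using p card_mono[of "{..<N}" "snd p"] by (auto simp: MT_def)
      ultimately show False using p False by (auto simp: MT_def)
    qed
    then show ?thesis using e False by simp
  qed
qed

lemma group_ar:
  assumes k: "2 \<le> k" and T: "inP T"
  shows "(\<Sum>U\<in>PN N. ar k U * real (pbinom U T)) = (if pdeg T \<le> N then ar k T / fact (N - pdeg T) else 0)"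
proof -
  have "complex_of_real (\<Sum>U\<in>PN N. ar k U * real (pbinom U T)) = (\<Sum>U\<in>PN N. alpha k U * of_nat (pbinom U T))"
    by (simp add: alpha_def)
  also have "\<dots> = (if pdeg T \<le> N then alpha k T / fact (N - pdeg T) else 0)"
    by (rule group_alpha[OF k T])
  also have "\<dots> = complex_of_real (if pdeg T \<le> N then ar k T / fact (N - pdeg T) else 0)"
    by (cases "pdeg T \<le> N") (simp_all add: alpha_def)
  finally show ?thesis by (simp only: of_real_eq_iff)
qed

theorem proposition4p2:
  fixes k :: nat and lam :: complex and T :: "rtree option"
  assumes "2 \<le> k" and "inP T"
  shows "((\<lambda>U. exp_k k U * of_nat (pbinom U T) * lam ^ (pdeg U - pdeg T))
           has_sum (exp lam * exp_k k T)) {U. inP U}"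
proof -
  note k = assms(1) and T = assms(2)
  define d where "d = pdeg T"
  define f where "f = (\<lambda>U. exp_k k U * of_nat (pbinom U T) * lam ^ (pdeg U - d))"
  define G where "G = (\<lambda>N. if d \<le> N then alpha k T / fact (N - d) * lam ^ (N - d) else 0)"
  define Gn where "Gn = (\<lambda>N. if d \<le> N then ar k T / fact (N - d) * norm lam ^ (N - d) else 0)"
  have ek: "exp_k k = alpha k" by (rule exp_k_alpha[OF k])
  have hf: "(f has_sum G N) (PN N)" for N
  proof -
    have "sum f (PN N) = (\<Sum>U\<in>PN N. alpha k U * of_nat (pbinom U T)) * lam ^ (N - d)"
      by (simp add: f_def ek sum_distrib_right PN_def)
    also have "\<dots> = G N" by (simp add: group_alpha[OF k T] G_def d_def)
    finally have "sum f (PN N) = G N" .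
    then show ?thesis using has_sum_finite[OF finite_P_eq[of N], of f] unfolding PN_def by metis
  qed
  have nf: "norm (f U) = ar k U * real (pbinom U T) * norm lam ^ (pdeg U - d)" for U
    using ar_nonneg[OF k, of U] by (simp add: f_def ek alpha_def norm_mult norm_power)
  have hnf: "((\<lambda>U. norm (f U)) has_sum Gn N) (PN N)" for N
  proof -
    have "(\<Sum>U\<in>PN N. norm (f U)) = (\<Sum>U\<in>PN N. ar k U * real (pbinom U T)) * norm lam ^ (N - d)"
      by (simp add: nf sum_distrib_right PN_def)
    also have "\<dots> = Gn N" by (simp add: group_ar[OF k T] Gn_def d_def)
    finally have "(\<Sum>U\<in>PN N. norm (f U)) = Gn N" .
    then show ?thesis using has_sum_finite[OF finite_P_eq[of N], of "\<lambda>U. norm (f U)"] unfolding PN_def by metis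
  qed
  have Gn_sum: "Gn summable_on UNIV"
    using exp_shift_has_sum[of d "ar k T" "norm lam"] unfolding Gn_def
    by (rule has_sum_imp_summable)
  have G_sum: "(G has_sum alpha k T * exp lam) UNIV"
    using exp_shift_has_sum[of d "alpha k T" lam] unfolding G_def .
  have disj: "disjoint_family_on PN UNIV" unfolding disjoint_family_on_def PN_def by blast
  have U: "(\<Union>N\<in>UNIV. PN N) = {U. inP U}" unfolding PN_def by blast
  have "(\<lambda>U. norm (f U)) summable_on (\<Union>N\<in>UNIV. PN N)"
    by (rule summable_on_UnionI[OF hnf Gn_sum _ disj]) (rule norm_ge_zero)
  then have fs: "f summable_on (\<Union>N\<in>UNIV. PN N)"
    by (rule abs_summable_summable)
  have injs: "inj_on snd (Sigma UNIV PN)"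
  proof (rule inj_onI)
    fix x y assume "x \<in> Sigma UNIV PN" "y \<in> Sigma UNIV PN" "snd x = snd y"
    then show "x = y" by (cases x, cases y) (simp add: PN_def)
  qed
  have sig: "snd ` Sigma UNIV PN = (\<Union>N\<in>UNIV. PN N)" by (rule snd_image_Sigma)
  have "(f \<circ> snd) summable_on Sigma UNIV PN"
    using fs summable_on_reindex[OF injs, of f] sig by simp
  then have "((f \<circ> snd) has_sum alpha k T * exp lam) (Sigma UNIV PN)"
    by (intro has_sum_SigmaI[OF _ G_sum]) (simp_all add: hf)
  then have "(f has_sum alpha k T * exp lam) (snd ` Sigma UNIV PN)"
    using has_sum_reindex[OF injs, of f] by blast
  then show ?thesis unfolding sig U f_def d_def ek by (simp add: mult.commute)
qed


end
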